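(* Let $f(x)=\ln(e-x)$ for $0\le x\le e-1$ and $f(x)=0$ for $x>e-1$. There is a function $\rho(\theta)$ with $\rho(\theta)\to1-1/e$ as $\theta\to0$ such that for every instance with largeness ratio $\theta=c_{\max}/B$, the utility $\sum_iu_if_{r_i}(c_i/u_i)$ obtained by $\mathrm{Truthful}(f)$ (with true costs) is at least $\rho(\theta)U^\star$.
   Context: Setting: a buyer with budget $B>0$ faces a finite set $S$ of sellers; seller $i$ owns one divisible item giving utility $u_i>0$ and has cost $c_i\ge0$; buying fraction $x_i\in[0,1]$ costs $x_ic_i$ and gives utility $x_iu_i$. $U^\star=\max\{\sum_iu_i\alpha_i:\alpha\in[0,1]^S,\sum_ic_i\alpha_i\le B\}$; $c_{\max}=\max_ic_i$. For a non-increasing $f:[0,\infty)\to[0,1]$ with $f(0)=1$, $f(e-1)=0$ and $r>0$: $f_r(x)=f(x/r)$, $Q_r(x)=xf_r(x)+\int_x^\infty f_r(y)\,dy$, $P_{i,r}(x)=u_iQ_r(x/u_i)$. $\mathrm{EnvyFree}(f)$ on cost vector $c$ has stopping rate $r^\star$, the value at which, decreasing $r$ from $\infty$, the nondecreasing function $r\mapsto\sum_iP_{i,r}(c_i)$ first equals $B$. $\mathrm{Truthful}(f)$: for each $i$, $r_i$ is the stopping rate of $\mathrm{EnvyFree}(f)$ on the cost vector obtained from $c$ by setting the $i$-th cost to $0$; it buys $f_{r_i}(c_i/u_i)$ of item $i$ and pays $P_{i,r_i}(c_i)$. *)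

theory Defs
  imports "HOL-Analysis.Analysis"
begin

definition fLog :: "real \<Rightarrow> real" where
  "fLog x = (if 0 \<le> x \<and> x \<le> exp 1 - 1 then ln (exp 1 - x) else 0)"

definition f_rate :: "(real \<Rightarrow> real) \<Rightarrow> real \<Rightarrow> real \<Rightarrow> real" where
  "f_rate f r x = f (x / r)"

definition Q_rate :: "(real \<Rightarrow> real) \<Rightarrow> real \<Rightarrow> real \<Rightarrow> real" where
  "Q_rate f r x = x * f_rate f r x + integral {x..} (f_rate f r)"

definition P_rate :: "(real \<Rightarrow> real) \<Rightarrow> real \<Rightarrow> real \<Rightarrow> real \<Rightarrow> real" where
  "P_rate f ui r x = ui * Q_rate f r (x / ui)"

definition ef_total :: "(real \<Rightarrow> real) \<Rightarrow> nat set \<Rightarrow> (nat \<Rightarrow> real) \<Rightarrow> (nat \<Rightarrow> real) \<Rightarrow> real \<Rightarrow> real" where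
  "ef_total f S u c r = (\<Sum>i\<in>S. P_rate f (u i) r (c i))"

text \<open>Stopping rate of EnvyFree(f): decreasing r from infinity, the first (i.e. the largest)
  positive r at which the total payment equals B.\<close>
definition stopping_rate :: "(real \<Rightarrow> real) \<Rightarrow> nat set \<Rightarrow> (nat \<Rightarrow> real) \<Rightarrow> (nat \<Rightarrow> real) \<Rightarrow> real \<Rightarrow> real" where
  "stopping_rate f S u c B = (GREATEST r. 0 < r \<and> ef_total f S u c r = B)"

definition truthful_rate :: "(real \<Rightarrow> real) \<Rightarrow> nat set \<Rightarrow> (nat \<Rightarrow> real) \<Rightarrow> (nat \<Rightarrow> real) \<Rightarrow> real \<Rightarrow> nat \<Rightarrow> real" where
  "truthful_rate f S u c B i = stopping_rate f S u (c(i := 0)) B"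

definition truthful_utility :: "(real \<Rightarrow> real) \<Rightarrow> nat set \<Rightarrow> (nat \<Rightarrow> real) \<Rightarrow> (nat \<Rightarrow> real) \<Rightarrow> real \<Rightarrow> real" where
  "truthful_utility f S u c B = (\<Sum>i\<in>S. u i * f_rate f (truthful_rate f S u c B i) (c i / u i))"

definition opt_utility :: "nat set \<Rightarrow> (nat \<Rightarrow> real) \<Rightarrow> (nat \<Rightarrow> real) \<Rightarrow> real \<Rightarrow> real" where
  "opt_utility S u c B = Sup {(\<Sum>i\<in>S. u i * \<alpha> i) | \<alpha>.
      (\<forall>i\<in>S. 0 \<le> \<alpha> i \<and> \<alpha> i \<le> 1) \<and> (\<Sum>i\<in>S. c i * \<alpha> i) \<le> B}"

definition cmax :: "nat set \<Rightarrow> (nat \<Rightarrow> real) \<Rightarrow> real" where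
  "cmax S c = Max (c ` S)"

end

theory Submission
  imports Defs
begin


definition qq :: "real \<Rightarrow> real" where
  "qq t = exp 1 * ln (exp 1 - min t (exp 1 - 1)) + min t (exp 1 - 1) + 1 - exp 1"

definition HH :: "real \<Rightarrow> real \<Rightarrow> real" where
  "HH x r = r * qq (x / r)"

lemma e_ge2: "2 \<le> exp (1::real)"
  using exp_ge_add_one_self[of 1] by simp

lemma fLog_eq: "0 \<le> t \<Longrightarrow> fLog t = ln (exp 1 - min t (exp 1 - 1))"
  by (auto simp: fLog_def min_def)

lemma fLog_nonneg: "0 \<le> fLog t"
  by (auto simp: fLog_def)

lemma fLog_antimono: "0 \<le> s \<Longrightarrow> s \<le> t \<Longrightarrow> fLog t \<le> fLog s"
  using e_ge2 by (auto simp: fLog_eq min_def)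

lemma qq_bounds: assumes "0 \<le> t" shows "0 \<le> qq t" "qq t \<le> 1"
proof -
  define s where "s = exp 1 - min t (exp 1 - 1)"
  have s1: "1 \<le> s" "s \<le> exp 1" using assms e_ge2 by (auto simp: s_def min_def)
  have q: "qq t = exp 1 * ln s + 1 - s" by (simp add: qq_def s_def)
  have l1: "ln (1/s) \<le> 1/s - 1" using s1 by (intro ln_le_minus_one) auto
  hence l1': "1 - 1/s \<le> ln s" using s1 by (simp add: ln_div)
  have "exp 1 * (1 - 1/s) \<ge> s - 1" using s1
  proof -
    have "0 \<le> (exp 1 - s) * (s - 1)" using s1 by simp
    thus ?thesis using s1 by (simp add: field_simps algebra_simps)
  qed
  hence "exp 1 * ln s \<ge> s - 1" using l1' mult_left_mono[OF l1', of "exp 1"] by (smt (verit) exp_gt_zero)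
  thus "0 \<le> qq t" using q by simp
  have l2: "ln (s / exp 1) \<le> s / exp 1 - 1" using s1 by (intro ln_le_minus_one) auto
  hence "ln s \<le> s / exp 1" using s1 by (simp add: ln_div)
  hence "exp 1 * ln s \<le> s" by (simp add: field_simps)
  thus "qq t \<le> 1" using q by simp
qed

lemma qq_loss: assumes "0 \<le> t" shows "1 - qq t \<le> exp 1 * t"
proof (cases "t \<le> exp 1 - 1")
  case False
  hence "qq t = 0" by (simp add: qq_def min_def)
  moreover have "exp 1 * t \<ge> 1 * 1" using False e_ge2
    by (intro mult_mono) auto
  ultimately show ?thesis by simp
next
  case True
  define s where "s = exp 1 - t"
  have s1: "1 \<le> s" "s \<le> exp 1" using assms True by (auto simp: s_def)
  have q: "qq t = exp 1 * ln s + 1 - s" using True by (simp add: qq_def s_def)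
  have l2: "ln (exp 1 / s) \<le> exp 1 / s - 1" using s1 by (intro ln_le_minus_one) auto
  hence "1 - ln s \<le> exp 1 / s - 1" using s1 by (simp add: ln_div)
  hence "exp 1 * (2 - exp 1 / s) \<le> exp 1 * ln s" by simp
  hence "1 - qq t \<le> s - exp 1 * (2 - exp 1 / s)" using q by simp
  also have "\<dots> = t^2 / s" using s1 by (simp add: s_def field_simps power2_eq_square)
  also have "\<dots> \<le> t^2" using s1 assms by (simp add: field_simps power2_eq_square) (metis mult_right_mono mult_1 zero_le_mult_iff zero_le_square)
  also have "\<dots> \<le> exp 1 * t" using True assms by (simp add: power2_eq_square mult_right_mono)
  finally show ?thesis .
qed

lemma HH_zero: "0 < r \<Longrightarrow> HH 0 r = r"
  by (simp add: HH_def qq_def)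



lemma int_closed:
  assumes x: "0 \<le> x" and r: "0 < r"
  shows "((\<lambda>y. fLog (y / r)) has_integral (r * qq (x / r) - x * fLog (x / r))) {x..}"
proof (cases "r * (exp 1 - 1) \<le> x")
  case True
  have xr: "exp 1 - 1 \<le> x / r" using True r by (simp add: field_simps)
  have z: "fLog (y / r) = 0" if "y \<in> {x..}" for y
  proof -
    have "exp 1 - 1 \<le> y / r" using xr that r by (smt (verit) atLeast_iff divide_right_mono)
    thus ?thesis using that x r by (auto simp: fLog_eq min_def zero_le_divide_iff)
  qed
  have "fLog (x/r) = 0" using z by auto
  moreover have "qq (x/r) = 0" using xr by (simp add: qq_def min_def)
  moreover have "((\<lambda>y. fLog (y / r)) has_integral 0) {x..}"
    by (rule has_integral_eq[where f="\<lambda>_. 0"]) (use z in auto)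
  ultimately show ?thesis by simp
next
  case False
  define a where "a = r * (exp 1 - 1)"
  have xa: "x < a" using False a_def by simp
  define G where "G y = - r * ((exp 1 - y / r) * ln (exp 1 - y / r) - (exp 1 - y / r))" for y
  have pos: "1 \<le> exp 1 - y / r" if "y \<le> a" for y
    using that r by (simp add: a_def field_simps)
  have der: "(G has_vector_derivative ln (exp 1 - y / r)) (at y within {x..a})" if "y \<in> {x..a}" for y
  proof -
    have p: "0 < exp 1 - y / r" using pos[of y] that by auto
    have "(G has_real_derivative ln (exp 1 - y / r)) (at y)"
      unfolding G_def[abs_def]
      by (rule derivative_eq_intros refl | use p r in simp)+
    thus ?thesis by (simp add: has_real_derivative_iff_has_vector_derivative has_vector_derivative_at_within)
  qed
  have I: "((\<lambda>y. ln (exp 1 - y / r)) has_integral (G a - G x)) {x..a}"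
    by (rule fundamental_theorem_of_calculus) (use xa der in auto)
  have Ga: "G a = r" using r by (simp add: G_def a_def)
  have val: "G a - G x = r * qq (x / r) - x * fLog (x / r)"
  proof -
    have xr: "x / r \<le> exp 1 - 1" using xa r by (simp add: a_def field_simps)
    define L where "L = ln (exp 1 - x/r)"
    have f1: "fLog (x/r) = L" using xr x r by (simp add: fLog_eq min_def L_def)
    have q1: "qq (x/r) = exp 1 * L + x/r + 1 - exp 1"
      using xr by (simp add: qq_def min_def L_def)
    have rx: "r * (x / r) = x" using r by simp
    have g1: "G x = - r * ((exp 1 - x / r) * L - (exp 1 - x / r))" by (simp add: G_def L_def)
    have "r * qq (x/r) = r * exp 1 * L + x + r - r * exp 1" unfolding q1 using rx r
      by (simp add: algebra_simps)
    moreover have "G x = - r * exp 1 * L + x * L + r * exp 1 - x" unfolding g1 using rx r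
      by (simp add: algebra_simps)
    ultimately show ?thesis using Ga f1 by simp
  qed
  have I2: "((\<lambda>y. if y \<in> {x..a} then ln (exp 1 - y / r) else 0) has_integral (G a - G x)) {x..}"
    using I by (subst has_integral_restrict) auto
  show ?thesis
  proof (rule has_integral_eq[OF _ I2[unfolded val]])
    fix y assume y: "y \<in> {x..}"
    show "(if y \<in> {x..a} then ln (exp 1 - y / r) else 0) = fLog (y / r)"
    proof (cases "y \<le> a")
      case True
      hence "y / r \<le> exp 1 - 1" using r by (simp add: a_def field_simps)
      then show ?thesis using True y x r by (auto simp: fLog_eq min_def)
    next
      case False
      hence "\<not> y / r \<le> exp 1 - 1" using r by (simp add: a_def field_simps)
      then show ?thesis using False y by (auto simp: fLog_def)
    qed
  qed
qed

lemma Q_closed: "0 \<le> x \<Longrightarrow> 0 < r \<Longrightarrow> Q_rate fLog r x = HH x r"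
  using int_closed[of x r] by (simp add: Q_rate_def f_rate_def[abs_def] HH_def integral_unique)

lemma Q_integrable: "0 \<le> x \<Longrightarrow> 0 < r \<Longrightarrow> f_rate fLog r integrable_on {x..}"
  using int_closed[of x r] by (auto simp: f_rate_def[abs_def])

lemma HH_mono: assumes x: "0 \<le> x" and r: "0 < r1" "r1 \<le> r2"
  shows "HH x r1 \<le> HH x r2"
proof -
  have r2: "0 < r2" using r by simp
  have a: "f_rate fLog r1 y \<le> f_rate fLog r2 y" if "y \<ge> 0" for y
    unfolding f_rate_def using that r
    by (intro fLog_antimono) (auto simp: frac_le divide_left_mono)
  have "integral {x..} (f_rate fLog r1) \<le> integral {x..} (f_rate fLog r2)"
    using x by (intro integral_le Q_integrable r r2 a) auto
  moreover have "x * f_rate fLog r1 x \<le> x * f_rate fLog r2 x" using a x by (simp add: mult_left_mono)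
  ultimately have "Q_rate fLog r1 x \<le> Q_rate fLog r2 x" by (simp add: Q_rate_def)
  thus ?thesis using Q_closed x r r2 by simp
qed

lemma HH_cont: assumes "0 < a" shows "continuous_on {a..b} (HH x)"
proof -
  have "continuous_on {a..b} (\<lambda>r. r * (exp 1 * ln (exp 1 - min (x / r) (exp 1 - 1)) + min (x / r) (exp 1 - 1) + 1 - exp 1))"
    using assms e_ge2 by (intro continuous_intros) (auto simp: min_def)
  thus ?thesis by (simp add: HH_def[abs_def] qq_def)
qed



lemma HH_bounds: "0 \<le> x \<Longrightarrow> 0 < r \<Longrightarrow> 0 \<le> HH x r \<and> HH x r \<le> r"
  using qq_bounds[of "x/r"] by (simp add: HH_def mult_left_le)

lemma stop_root:
  assumes S: "finite S" "i \<in> S" and u: "\<forall>j\<in>S. u j > 0" and c: "\<forall>j\<in>S. c' j \<ge> 0"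
    and ci: "c' i = 0" and B: "B > 0"
  shows "stopping_rate fLog S u c' B > 0 \<and> ef_total fLog S u c' (stopping_rate fLog S u c' B) = B"
proof -
  define G where "G r = (\<Sum>j\<in>S. u j * HH (c' j / u j) r)" for r
  define R where "R r = (\<Sum>j\<in>S-{i}. u j * HH (c' j / u j) r)" for r
  have xnn: "0 \<le> c' j / u j" if "j \<in> S" for j using u c that by (simp add: order_less_imp_le)
  have ef: "ef_total fLog S u c' r = G r" if "r > 0" for r
    unfolding ef_total_def P_rate_def G_def
    by (rule sum.cong) (use Q_closed xnn that in auto)
  have split: "G r = u i * r + R r" if "r > 0" for r
    unfolding G_def R_def using S ci that HH_zero[OF that] by (simp add: sum.remove)
  have Rmono: "R r1 \<le> R r2" if "0 < r1" "r1 \<le> r2" for r1 r2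
    unfolding R_def using that u xnn
    by (intro sum_mono mult_left_mono HH_mono) auto
  have Rnn: "0 \<le> R r" if "0 < r" for r
    unfolding R_def using that u xnn HH_bounds by (intro sum_nonneg) (simp add: order_less_imp_le)
  have strict: "G r1 < G r2" if "0 < r1" "r1 < r2" for r1 r2
  proof -
    have "u i * r1 < u i * r2" using that u S by simp
    thus ?thesis using split[of r1] split[of r2] Rmono[of r1 r2] that by simp
  qed
  define U where "U = (\<Sum>j\<in>S. u j)"
  have Ui: "u i \<le> U" unfolding U_def using S u by (intro member_le_sum) (auto simp: order_less_imp_le)
  have ui: "u i > 0" using u S by simp
  have Upos: "U > 0" using Ui ui by simp
  have Gup: "G r \<le> r * U" if "r > 0" for r
  proof -
    have "G r \<le> (\<Sum>j\<in>S. u j * r)" unfolding G_def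
      using u xnn HH_bounds that by (intro sum_mono mult_left_mono) (auto simp: order_less_imp_le)
    thus ?thesis by (simp add: U_def sum_distrib_left sum_distrib_right mult.commute)
  qed
  have Glow: "u i * r \<le> G r" if "r > 0" for r using split[OF that] Rnn[OF that] by simp
  define a where "a = B / (2 * U)"
  define b where "b = 2 * B / u i"
  have a0: "a > 0" using B Upos by (simp add: a_def)
  have ab: "a \<le> b" unfolding a_def b_def using B Upos ui Ui
    by (simp add: frac_le divide_le_eq field_simps)
  have Ga: "G a \<le> B" using Gup[OF a0] Upos B by (simp add: a_def)
  have Gb: "B \<le> G b" using Glow[of b] a0 ab ui B by (simp add: b_def)
  have cont: "continuous_on {a..b} G"
    unfolding G_def by (intro continuous_intros continuous_on_mult_left HH_cont a0)
  obtain r0 where r0: "a \<le> r0" "r0 \<le> b" "G r0 = B" using IVT'[OF Ga Gb ab cont] by blast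
  have r0p: "r0 > 0" using r0 a0 by simp
  have "stopping_rate fLog S u c' B = r0"
    unfolding stopping_rate_def
  proof (rule Greatest_equality)
    show "0 < r0 \<and> ef_total fLog S u c' r0 = B" using r0p r0 ef by simp
    fix y assume "0 < y \<and> ef_total fLog S u c' y = B"
    thus "y \<le> r0" using strict[of r0 y] r0p r0 ef[of y] by force
  qed
  thus ?thesis using r0p r0 ef by simp
qed



lemma item:
  assumes t: "0 \<le> t" and a: "0 \<le> \<alpha>" "\<alpha> \<le> 1"
  shows "(1 - 1 / exp 1) * \<alpha> \<le> fLog t + (\<alpha> * t - qq t) / exp 1"
    and "qq t / exp 1 \<le> fLog t"
proof -
  define m where "m = min t (exp 1 - 1)"
  define L where "L = ln (exp 1 - m)"
  have f: "fLog t = L" using t by (simp add: fLog_eq L_def m_def)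
  have q: "qq t = exp 1 * L + m + 1 - exp 1" by (simp add: qq_def L_def m_def)
  have e: "exp 1 > (0::real)" by simp
  have key: "(exp 1 - 1) * \<alpha> \<le> \<alpha> * t + exp 1 - m - 1"
  proof (cases "t \<le> exp 1 - 1")
    case True
    hence "m = t" by (simp add: m_def)
    moreover have "(exp 1 - 1 - t) * \<alpha> \<le> (exp 1 - 1 - t) * 1" using True a by (intro mult_left_mono) auto
    ultimately show ?thesis by (simp add: algebra_simps)
  next
    case False
    hence "m = exp 1 - 1" by (simp add: m_def)
    moreover have "(exp 1 - 1) * \<alpha> \<le> t * \<alpha>" using False a by (intro mult_right_mono) auto
    ultimately show ?thesis by (simp add: algebra_simps)
  qed
  have "(1 - 1 / exp 1) * \<alpha> = ((exp 1 - 1) * \<alpha>) / exp 1" using e by (simp add: field_simps)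
  also have "\<dots> \<le> (\<alpha> * t + exp 1 - m - 1) / exp 1" using key e by (intro divide_right_mono) auto
  also have "\<dots> = fLog t + (\<alpha> * t - qq t) / exp 1" unfolding f q using e by (simp add: field_simps)
  finally show "(1 - 1 / exp 1) * \<alpha> \<le> fLog t + (\<alpha> * t - qq t) / exp 1" .
  have "m \<le> exp 1 - 1" by (simp add: m_def)
  hence "qq t / exp 1 \<le> L" unfolding q using e by (simp add: field_simps)
  thus "qq t / exp 1 \<le> fLog t" using f by simp
qed

lemma alg:
  fixes B R cm k U A e :: real
  assumes "0 < B" "0 < R" "0 \<le> cm" "0 \<le> B - e*cm" "k*U \<le> A + cm/R"
    "(B - e*cm)/R \<le> e*A" "e > 0" "k \<ge> 0"
  shows "k * (1 - e * (cm / B)) * U \<le> A"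
proof -
  have th: "1 - e * (cm / B) = (B - e*cm) / B" using assms(1) by (simp add: field_simps)
  have th0: "0 \<le> 1 - e * (cm / B)" unfolding th using assms by simp
  have "k * (1 - e * (cm / B)) * U = (1 - e * (cm / B)) * (k * U)" by simp
  also have "\<dots> \<le> (1 - e * (cm / B)) * (A + cm/R)" using th0 assms(5) by (rule mult_left_mono[rotated])
  also have "\<dots> = (1 - e * (cm / B)) * A + ((B - e*cm)/R) * (cm / B)"
    unfolding th using assms(1,2) by (simp add: field_simps)
  also have "\<dots> \<le> (1 - e * (cm / B)) * A + (e*A) * (cm / B)"
    using assms by (intro add_left_mono mult_right_mono) auto
  also have "\<dots> = A" by (simp add: algebra_simps)
  finally show ?thesis .
qed

theorem lemma11:
  shows "\<exists>\<rho> :: real \<Rightarrow> real. (\<rho> \<longlongrightarrow> 1 - 1 / exp 1) (at_right 0) \<and>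
    (\<forall>(S :: nat set) (u :: nat \<Rightarrow> real) (c :: nat \<Rightarrow> real) (B :: real).
       finite S \<longrightarrow> B > 0 \<longrightarrow> (\<forall>i\<in>S. u i > 0) \<longrightarrow> (\<forall>i\<in>S. c i \<ge> 0) \<longrightarrow>
       truthful_utility fLog S u c B \<ge> \<rho> (cmax S c / B) * opt_utility S u c B)"
proof (intro exI conjI allI impI)
  let ?rho = "\<lambda>\<theta>::real. (1 - 1 / exp 1) * (1 - exp 1 * \<theta>)"
  show "(?rho \<longlongrightarrow> 1 - 1 / exp 1) (at_right 0)"
    by (rule tendsto_eq_intros refl)+ simp
  fix S :: "nat set" and u c :: "nat \<Rightarrow> real" and B :: real
  assume S: "finite S" and B: "B > 0" and u: "\<forall>i\<in>S. u i > 0" and c: "\<forall>i\<in>S. c i \<ge> 0"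
  define Opt where "Opt = {(\<Sum>i\<in>S. u i * \<alpha> i) | \<alpha>.
      (\<forall>i\<in>S. 0 \<le> \<alpha> i \<and> \<alpha> i \<le> 1) \<and> (\<Sum>i\<in>S. c i * \<alpha> i) \<le> B}"
  have optO: "opt_utility S u c B = Sup Opt" by (simp add: opt_utility_def Opt_def)
  have Opt0: "0 \<in> Opt" unfolding Opt_def using B
    by (intro CollectI exI[of _ "\<lambda>_. 0"]) auto
  have Optbdd: "bdd_above Opt"
  proof (rule bdd_aboveI)
    fix y assume "y \<in> Opt"
    then obtain \<alpha> where y: "y = (\<Sum>i\<in>S. u i * \<alpha> i)" "\<forall>i\<in>S. 0 \<le> \<alpha> i \<and> \<alpha> i \<le> 1"
      unfolding Opt_def by blast
    show "y \<le> (\<Sum>i\<in>S. u i)" unfolding y(1) using y(2) u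
      by (intro sum_mono) (simp add: mult_left_le order_less_imp_le)
  qed
  have Unn: "0 \<le> opt_utility S u c B" unfolding optO using Opt0 Optbdd by (rule cSup_upper)
  show "?rho (cmax S c / B) * opt_utility S u c B \<le> truthful_utility fLog S u c B"
  proof (cases "S = {}")
    case True
    have "Opt = {0}" unfolding Opt_def True using B by auto
    hence "opt_utility S u c B = 0" using optO by simp
    thus ?thesis using True by (simp add: truthful_utility_def)
  next
    case Sne: False
    define r where "r i = truthful_rate fLog S u c B i" for i
    have ri: "r i > 0 \<and> ef_total fLog S u (c(i := 0)) (r i) = B" if "i \<in> S" for i
      unfolding r_def truthful_rate_def
      by (rule stop_root[OF S that u _ _ B]) (use c in auto)
    obtain k where k: "k \<in> S" "r k = Min (r ` S)"
    proof -
      have "Min (r ` S) \<in> r ` S" using S Sne by (intro Min_in) auto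
      then obtain k where "k \<in> S" "Min (r ` S) = r k" by (auto simp del: Min_in)
      thus ?thesis using that by metis
    qed
    have kmin: "r k \<le> r i" if "i \<in> S" for i using k S that by simp
    define R where "R = r k"
    have R: "R > 0" using ri[OF k(1)] by (simp add: R_def)
    define x where "x j = c j / u j" for j
    have xnn: "0 \<le> x j" if "j \<in> S" for j using u c that by (simp add: x_def order_less_imp_le)
    have ux: "u j * x j = c j" if "j \<in> S" for j using u that by (simp add: x_def order_less_imp_not_eq2)
    define cm where "cm = cmax S c"
    have ckcm: "c k \<le> cm" unfolding cm_def cmax_def using S k by simp
    have cm0: "0 \<le> cm" using ckcm c k by force
    define E where "E = (\<Sum>j\<in>S. u j * HH (x j) R)"
    define A where "A = (\<Sum>j\<in>S. u j * fLog (x j / R))"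
    define Rest where "Rest = (\<Sum>j\<in>S-{k}. u j * HH (x j) R)"
    have hB: "B = u k * R + Rest"
    proof -
      have "B = ef_total fLog S u (c(k := 0)) R" using ri[OF k(1)] by (simp add: R_def)
      also have "\<dots> = (\<Sum>j\<in>S. u j * HH ((c(k:=0)) j / u j) R)"
        unfolding ef_total_def P_rate_def
        by (rule sum.cong) (use Q_closed R c u in \<open>auto simp: order_less_imp_le\<close>)
      also have "\<dots> = u k * HH 0 R + (\<Sum>j\<in>S-{k}. u j * HH ((c(k:=0)) j / u j) R)"
        using S k by (simp add: sum.remove)
      also have "(\<Sum>j\<in>S-{k}. u j * HH ((c(k:=0)) j / u j) R) = Rest"
        unfolding Rest_def x_def by (rule sum.cong) auto
      finally show ?thesis using HH_zero[OF R] by simp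
    qed
    have hE: "E = u k * HH (x k) R + Rest" unfolding E_def Rest_def using S k by (simp add: sum.remove)
    have loss: "u k * R - u k * HH (x k) R \<le> exp 1 * c k"
    proof -
      have "u k * R - u k * HH (x k) R = u k * R * (1 - qq (x k / R))" by (simp add: HH_def algebra_simps)
      also have "\<dots> \<le> u k * R * (exp 1 * (x k / R))"
        using qq_loss[of "x k / R"] xnn[OF k(1)] R u k by (intro mult_left_mono) auto
      also have "\<dots> = exp 1 * c k" using R ux[OF k(1)] by (simp add: field_simps)
      finally show ?thesis .
    qed
    have EB: "B - E \<le> exp 1 * cm" using hB hE loss ckcm
      by (smt (verit) exp_gt_zero mult_left_mono)
    have ALG: "A \<le> truthful_utility fLog S u c B"
      unfolding truthful_utility_def A_def f_rate_def
    proof (rule sum_mono)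
      fix i assume i: "i \<in> S"
      have "x i / r i \<le> x i / R" using kmin[OF i] R xnn[OF i] by (simp add: R_def divide_left_mono)
      hence "fLog (x i / R) \<le> fLog (x i / r i)"
        using xnn[OF i] ri[OF i] by (intro fLog_antimono) auto
      hence "u i * fLog (x i / R) \<le> u i * fLog (x i / r i)"
        using u i by (simp add: order_less_imp_le mult_left_mono)
      thus "u i * fLog (x i / R) \<le> u i * fLog (c i / u i / truthful_rate fLog S u c B i)"
        by (simp add: x_def r_def)
    qed
    have AE: "E / R \<le> exp 1 * A"
    proof -
      have "E / (exp 1 * R) = (\<Sum>j\<in>S. u j * (qq (x j / R) / exp 1))"
        unfolding E_def sum_divide_distrib using R by (intro sum.cong) (auto simp: HH_def)
      also have "\<dots> \<le> A" unfolding A_def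
        using item(2)[of _ 0] xnn R u by (intro sum_mono mult_left_mono) (auto simp: order_less_imp_le)
      finally show ?thesis using R by (simp add: field_simps)
    qed
    have main: "(1 - 1 / exp 1) * y \<le> A + cm / R" if "y \<in> Opt" for y
    proof -
      obtain \<alpha> where y: "y = (\<Sum>i\<in>S. u i * \<alpha> i)" and a: "\<forall>i\<in>S. 0 \<le> \<alpha> i \<and> \<alpha> i \<le> 1"
        and cb: "(\<Sum>i\<in>S. c i * \<alpha> i) \<le> B"
        using \<open>y \<in> Opt\<close> unfolding Opt_def by blast
      have "(1 - 1 / exp 1) * y = (\<Sum>i\<in>S. u i * ((1 - 1 / exp 1) * \<alpha> i))"
        unfolding y by (simp add: sum_distrib_left algebra_simps)
      also have "\<dots> \<le> (\<Sum>i\<in>S. u i * (fLog (x i / R) + (\<alpha> i * (x i / R) - qq (x i / R)) / exp 1))"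
      proof (rule sum_mono)
        fix i assume i: "i \<in> S"
        have "(1 - 1 / exp 1) * \<alpha> i \<le> fLog (x i / R) + (\<alpha> i * (x i / R) - qq (x i / R)) / exp 1"
          using xnn[OF i] R a i by (intro item(1)) auto
        thus "u i * ((1 - 1 / exp 1) * \<alpha> i) \<le> u i * (fLog (x i / R) + (\<alpha> i * (x i / R) - qq (x i / R)) / exp 1)"
          using u i by (intro mult_left_mono) auto
      qed
      also have "\<dots> = (\<Sum>i\<in>S. u i * fLog (x i / R) + (c i * \<alpha> i) / (exp 1 * R) - u i * HH (x i) R / (exp 1 * R))"
      proof (rule sum.cong[OF refl])
        fix i assume i: "i \<in> S"
        have "u i * (fLog (x i / R) + (\<alpha> i * (x i / R) - qq (x i / R)) / exp 1)
          = u i * fLog (x i / R) + (\<alpha> i * (u i * x i)) / (exp 1 * R) - u i * (R * qq (x i / R)) / (exp 1 * R)"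
          using R by (simp add: field_simps)
        thus "u i * (fLog (x i / R) + (\<alpha> i * (x i / R) - qq (x i / R)) / exp 1)
          = u i * fLog (x i / R) + (c i * \<alpha> i) / (exp 1 * R) - u i * HH (x i) R / (exp 1 * R)"
          unfolding ux[OF i] HH_def by (simp add: mult.commute)
      qed
      also have "\<dots> = A + (\<Sum>i\<in>S. c i * \<alpha> i) / (exp 1 * R) - E / (exp 1 * R)"
        unfolding A_def E_def by (simp add: sum.distrib sum_subtractf sum_divide_distrib)
      also have "\<dots> \<le> A + (B - E) / (exp 1 * R)"
        using cb R by (simp add: diff_divide_distrib divide_right_mono)
      also have "\<dots> \<le> A + cm / R"
      proof -
        have "(B - E) / (exp 1 * R) \<le> (exp 1 * cm) / (exp 1 * R)" using EB R by (intro divide_right_mono) auto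
        thus ?thesis by simp
      qed
      finally show ?thesis .
    qed
    have A0: "0 \<le> A" unfolding A_def using u by (intro sum_nonneg) (simp add: fLog_nonneg order_less_imp_le)
    show ?thesis
    proof (cases "0 < ?rho (cmax S c / B)")
      case False
      hence "?rho (cmax S c / B) * opt_utility S u c B \<le> 0" using Unn by (simp add: mult_nonpos_nonneg)
      thus ?thesis using ALG A0 by simp
    next
      case True
      have e1: "0 < 1 - 1 / exp (1::real)" using e_ge2 by (simp add: field_simps)
      have th: "0 < 1 - exp 1 * (cm / B)" using True e1 cm_def by (simp add: zero_less_mult_iff)
      have Bc: "0 \<le> B - exp 1 * cm" using th B by (simp add: field_simps)
      have bound: "?rho (cmax S c / B) * y \<le> A" if "y \<in> Opt" for y
        unfolding cm_def[symmetric]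
        by (rule alg[OF B R cm0 Bc main[OF that]]) (use AE hB hE EB R e1 in \<open>auto simp: field_simps\<close>)
      have "opt_utility S u c B \<le> A / ?rho (cmax S c / B)"
        unfolding optO
      proof (rule cSup_least)
        show "Opt \<noteq> {}" using Opt0 by auto
        fix y assume "y \<in> Opt"
        thus "y \<le> A / ?rho (cmax S c / B)" using bound True by (simp add: pos_le_divide_eq mult.commute)
      qed
      hence "?rho (cmax S c / B) * opt_utility S u c B \<le> A" using True by (simp add: pos_le_divide_eq mult.commute)
      thus ?thesis using ALG by simp
    qed
  qed
qed

end
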